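(* Let $\mathcal{K}=(\mathcal{R},\mathcal{T})$ be an ME-consistent $\mathcal{ALCP}$ knowledge base, $C,D$ concepts, $\kappa\in\mathcal{L}$, and $p_1<p_2$. Suppose $\mathcal{P}_1,\mathcal{P}_2$ are ME-$\mathcal{ALCP}$-models of $\mathcal{K}$ with $\Pr_{\mathcal{P}_1}(C\sqsubseteq D\mid\kappa)=p_1$ and $\Pr_{\mathcal{P}_2}(C\sqsubseteq D\mid\kappa)=p_2$. Then for every $p$ between $p_1$ and $p_2$ there exists an ME-$\mathcal{ALCP}$-model $\mathcal{P}$ of $\mathcal{K}$ with $\Pr_{\mathcal{P}}(C\sqsubseteq D\mid\kappa)=p$.
   Context: $\mathcal{L}$ is a propositional language over a finite set of variables; $\mathrm{Int}(\mathcal{L})$ is the set of truth assignments. A probability distribution over $\mathcal{L}$ is $P:\mathrm{Int}(\mathcal{L})\to[0,1]$ summing to $1$, with $P(\phi)=\sum_{v\models\phi}P(v)$. A probabilistic constraint is $c_0+\sum_{i=1}^k c_i\,\mathsf{p}(\phi_i)\ge 0$ ($c_i\in\mathbb{R}$, $\phi_i\in\mathcal{L}$), satisfied by $P$ iff $c_0+\sum_ic_iP(\phi_i)\ge0$; $\mathrm{Mod}(\mathcal{R})$ is the set of distributions satisfying all constraints in $\mathcal{R}$; for consistent $\mathcal{R}$ (i.e. $\mathrm{Mod}(\mathcal{R})\ne\emptyset$), $P^{ME}_{\mathcal{R}}$ is the unique maximizer in $\mathrm{Mod}(\mathcal{R})$ of $H(P)=-\sum_vP(v)\log P(v)$. Concepts: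 $C::=A\mid\neg C\mid C\sqcap C\mid\exists r.C$ with concept names $A$ and role names $r$. An $\mathcal{L}$-GCI is $\langle C\sqsubseteq D:\kappa\rangle$, $\kappa\in\mathcal{L}$; an $\mathcal{L}$-TBox is a finite set of them; a KB is $\mathcal{K}=(\mathcal{R},\mathcal{T})$ with $\mathcal{R}$ a set of probabilistic constraints and $\mathcal{T}$ an $\mathcal{L}$-TBox. A possible world $\mathcal{I}=(\Delta^{\mathcal{I}},\cdot^{\mathcal{I}},v^{\mathcal{I}})$ consists of a classical $\mathcal{ALC}$ interpretation (nonempty domain, concept names to subsets, role names to binary relations, extended as usual to complex concepts) and $v^{\mathcal{I}}\in\mathrm{Int}(\mathcal{L})$; it models $\langle C\sqsubseteq D:\kappa\rangle$ iff $v^{\mathcal{I}}\not\models\kappa$ or $C^{\mathcal{I}}\subseteq D^{\mathcal{I}}$. We write $\mathcal{I}\models\kappa$ for $v^{\mathcal{I}}\models\kappa$ and $\mathcal{I}\models C\sqsubseteq D$ for $C^{\mathcal{I}}\subseteq D^{\mathcal{I}}$. An $\mathcal{ALCP}$-interpretation $\mathcal{P}=(\mathfrak{I},P_{\mathfrak{I}})$ is a nonempty finite set of possible worlds with a probability distribution on it; $P^{\mathcal{P}}(v)=\sum_{\mathcal{I}\in\mathfrak{I},v^{\mathcal{I}}=v}P_{\mathfrak{I}}(\mathcal{I})$. $\mathcal{P}$ is an ME-$\mathcal{ALCP}$-model of $\mathcal{K}$ iff all worlds in $\mathfrak{I}$ model every GCI of $\mathcal{T}$ and $P^{\mathcal{P}}=P^{ME}_{\mathcal{R}}$;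 $\mathcal{K}$ is ME-consistent iff such a model exists. $\Pr_{\mathcal{P}}(C\sqsubseteq D\mid\kappa)=\big(\sum_{\mathcal{I}\in\mathfrak{I},\mathcal{I}\models\kappa,\mathcal{I}\models C\sqsubseteq D}P_{\mathfrak{I}}(\mathcal{I})\big)/\big(\sum_{\mathcal{I}\in\mathfrak{I},\mathcal{I}\models\kappa}P_{\mathfrak{I}}(\mathcal{I})\big)$, defined when the denominator (which equals $P^{\mathcal{P}}(\kappa)$) is positive. *)

theory Defs
  imports Complex_Main
begin

datatype 'v pform =
    PTrue
  | PVar 'v
  | PNot "'v pform"
  | PAnd "'v pform" "'v pform"
  | POr "'v pform" "'v pform"

type_synonym 'v assignment = "'v \<Rightarrow> bool"

fun psat :: "'v assignment \<Rightarrow> 'v pform \<Rightarrow> bool" where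
  "psat v PTrue = True"
| "psat v (PVar x) = v x"
| "psat v (PNot f) = (\<not> psat v f)"
| "psat v (PAnd f g) = (psat v f \<and> psat v g)"
| "psat v (POr f g) = (psat v f \<or> psat v g)"

definition is_dist :: "('v::finite assignment \<Rightarrow> real) \<Rightarrow> bool" where
  "is_dist P \<longleftrightarrow> (\<forall>v. 0 \<le> P v) \<and> (\<Sum>v\<in>UNIV. P v) = 1"

definition prob_form :: "('v::finite assignment \<Rightarrow> real) \<Rightarrow> 'v pform \<Rightarrow> real" where
  "prob_form P \<phi> = (\<Sum>v\<in>{v. psat v \<phi>}. P v)"

text \<open>A probabilistic constraint c0 + sum_i c_i p(phi_i) >= 0 is (c0, [(c1,phi1),...,(ck,phik)]).\<close>

type_synonym 'v pconstr = "real \<times> (real \<times> 'v pform) list"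

definition sat_constr :: "('v::finite assignment \<Rightarrow> real) \<Rightarrow> 'v pconstr \<Rightarrow> bool" where
  "sat_constr P c \<longleftrightarrow> fst c + (\<Sum>(ci, \<phi>i)\<leftarrow>snd c. ci * prob_form P \<phi>i) \<ge> 0"

definition Mod :: "'v::finite pconstr set \<Rightarrow> ('v assignment \<Rightarrow> real) set" where
  "Mod R = {P. is_dist P \<and> (\<forall>c\<in>R. sat_constr P c)}"

definition consistent :: "'v::finite pconstr set \<Rightarrow> bool" where
  "consistent R \<longleftrightarrow> Mod R \<noteq> {}"

text \<open>Entropy; note ln 0 = 0 in Isabelle, giving the convention 0 log 0 = 0.\<close>

definition entropy :: "('v::finite assignment \<Rightarrow> real) \<Rightarrow> real" where
  "entropy P = - (\<Sum>v\<in>UNIV. P v * ln (P v))"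

text \<open>The ME distribution: the unique entropy maximiser in Mod R (meaningful for consistent R).\<close>

definition me_dist :: "'v::finite pconstr set \<Rightarrow> ('v assignment \<Rightarrow> real)" where
  "me_dist R = (THE P. P \<in> Mod R \<and> (\<forall>Q\<in>Mod R. entropy Q \<le> entropy P))"

datatype ('c, 'r) concept =
    CName 'c
  | CNeg "('c, 'r) concept"
  | CAnd "('c, 'r) concept" "('c, 'r) concept"
  | CEx 'r "('c, 'r) concept"

record ('d, 'c, 'r, 'v) pworld =
  wdom :: "'d set"
  cint :: "'c \<Rightarrow> 'd set"
  rint :: "'r \<Rightarrow> ('d \<times> 'd) set"
  wval :: "'v assignment"

definition wf_world :: "('d, 'c, 'r, 'v) pworld \<Rightarrow> bool" where
  "wf_world I \<longleftrightarrow> wdom I \<noteq> {} \<and> (\<forall>A. cint I A \<subseteq> wdom I)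
                  \<and> (\<forall>r. rint I r \<subseteq> wdom I \<times> wdom I)"

fun cext :: "('d, 'c, 'r, 'v) pworld \<Rightarrow> ('c, 'r) concept \<Rightarrow> 'd set" where
  "cext I (CName A) = cint I A"
| "cext I (CNeg C) = wdom I - cext I C"
| "cext I (CAnd C D) = cext I C \<inter> cext I D"
| "cext I (CEx r C) = {x \<in> wdom I. \<exists>y. (x, y) \<in> rint I r \<and> y \<in> cext I C}"

text \<open>L-GCI <C \<sqsubseteq> D : kappa> represented as (C, D, kappa).\<close>

type_synonym ('c, 'r, 'v) gci = "('c, 'r) concept \<times> ('c, 'r) concept \<times> 'v pform"

definition world_sat_incl :: "('d, 'c, 'r, 'v) pworld \<Rightarrow> ('c, 'r) concept \<Rightarrow> ('c, 'r) concept \<Rightarrow> bool" where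
  "world_sat_incl I C D \<longleftrightarrow> cext I C \<subseteq> cext I D"

definition world_models_gci :: "('d, 'c, 'r, 'v) pworld \<Rightarrow> ('c, 'r, 'v) gci \<Rightarrow> bool" where
  "world_models_gci I g = (case g of (C, D, \<kappa>) \<Rightarrow> \<not> psat (wval I) \<kappa> \<or> world_sat_incl I C D)"

type_synonym ('c, 'r, 'v) kb = "'v pconstr set \<times> ('c, 'r, 'v) gci set"

type_synonym ('d, 'c, 'r, 'v) alcp_interp =
  "('d, 'c, 'r, 'v) pworld set \<times> (('d, 'c, 'r, 'v) pworld \<Rightarrow> real)"

definition alcp_interp :: "('d, 'c, 'r, 'v) alcp_interp \<Rightarrow> bool" where
  "alcp_interp \<P> \<longleftrightarrow> (case \<P> of (W, Pw) \<Rightarrow>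
      finite W \<and> W \<noteq> {} \<and> (\<forall>I\<in>W. wf_world I) \<and> (\<forall>I\<in>W. 0 \<le> Pw I) \<and> (\<Sum>I\<in>W. Pw I) = 1)"

definition induced_dist :: "('d, 'c, 'r, 'v::finite) alcp_interp \<Rightarrow> ('v assignment \<Rightarrow> real)" where
  "induced_dist \<P> = (\<lambda>v. case \<P> of (W, Pw) \<Rightarrow> \<Sum>I\<in>{I\<in>W. wval I = v}. Pw I)"

definition me_model :: "('d, 'c, 'r, 'v::finite) alcp_interp \<Rightarrow> ('c, 'r, 'v) kb \<Rightarrow> bool" where
  "me_model \<P> K \<longleftrightarrow> (case K of (R, T) \<Rightarrow>
      finite T \<and> consistent R \<and> alcp_interp \<P>
      \<and> (\<forall>I\<in>fst \<P>. \<forall>g\<in>T. world_models_gci I g)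
      \<and> induced_dist \<P> = me_dist R)"

definition me_consistent :: "('c, 'r, 'v::finite) kb \<Rightarrow> 'd itself \<Rightarrow> bool" where
  "me_consistent K _ \<longleftrightarrow> (\<exists>\<P> :: ('d, 'c, 'r, 'v) alcp_interp. me_model \<P> K)"

definition cond_pr :: "('d, 'c, 'r, 'v) alcp_interp \<Rightarrow> ('c, 'r) concept \<Rightarrow> ('c, 'r) concept
                        \<Rightarrow> 'v pform \<Rightarrow> real option" where
  "cond_pr \<P> C D \<kappa> = (case \<P> of (W, Pw) \<Rightarrow>
     (let den = (\<Sum>I\<in>{I\<in>W. psat (wval I) \<kappa>}. Pw I);
          num = (\<Sum>I\<in>{I\<in>W. psat (wval I) \<kappa> \<and> world_sat_incl I C D}. Pw I)
      in if den > 0 then Some (num / den) else None))"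

end

theory Submission
  imports Defs
begin

lemma ext_sum:
  assumes "finite U" "W \<subseteq> U"
  shows "(\<Sum>I\<in>{I\<in>U. Q I}. if I \<in> W then f I else (0::real)) = (\<Sum>I\<in>{I\<in>W. Q I}. f I)"
proof -
  have "(\<Sum>I\<in>{I\<in>U. Q I}. if I \<in> W then f I else (0::real)) = (\<Sum>I\<in>{I\<in>U. Q I} \<inter> W. f I)"
    using assms(1) by (simp add: sum.inter_restrict)
  also have "{I\<in>U. Q I} \<inter> W = {I\<in>W. Q I}" using assms by auto
  finally show ?thesis .
qed

lemma mix_sum:
  assumes "finite U" "W1 \<subseteq> U" "W2 \<subseteq> U"
  shows "(\<Sum>I\<in>{I\<in>U. Q I}. t * (if I \<in> W1 then f1 I else 0) + (1 - t) * (if I \<in> W2 then f2 I else 0))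
    = t * (\<Sum>I\<in>{I\<in>W1. Q I}. f1 I) + (1 - t) * (\<Sum>I\<in>{I\<in>W2. Q I}. f2 I :: real)"
  by (simp add: sum.distrib sum_distrib_left[symmetric] ext_sum[OF assms(1,2)] ext_sum[OF assms(1,3)])

lemma den_induced:
  fixes W :: "('d, 'c, 'r, 'v::finite) pworld set"
  assumes "finite W"
  shows "(\<Sum>I\<in>{I\<in>W. psat (wval I) \<kappa>}. Pw I) = (\<Sum>v\<in>{v. psat v \<kappa>}. induced_dist (W, Pw) v)"
proof -
  have "(\<Sum>v\<in>{v. psat v \<kappa>}. induced_dist (W, Pw) v)
     = (\<Sum>v\<in>{v. psat v \<kappa>}. sum Pw {I\<in>{I\<in>W. psat (wval I) \<kappa>}. wval I = v})"
    unfolding induced_dist_def by (intro sum.cong) (auto intro!: arg_cong[where f="sum Pw"])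
  also have "\<dots> = (\<Sum>I\<in>{I\<in>W. psat (wval I) \<kappa>}. Pw I)"
    using assms by (intro sum.group) auto
  finally show ?thesis by simp
qed

theorem theorem2:
  fixes K :: "('c, 'r, 'v::finite) kb"
    and P1 P2 :: "('d, 'c, 'r, 'v) alcp_interp"
    and C D :: "('c, 'r) concept" and \<kappa> :: "'v pform"
    and p1 p2 p :: real
  assumes "me_consistent K TYPE('d)"
    and "p1 < p2"
    and "me_model P1 K" and "me_model P2 K"
    and "cond_pr P1 C D \<kappa> = Some p1"
    and "cond_pr P2 C D \<kappa> = Some p2"
    and "p1 \<le> p" and "p \<le> p2"
  shows "\<exists>P :: ('d, 'c, 'r, 'v) alcp_interp. me_model P K \<and> cond_pr P C D \<kappa> = Some p"
proof -
  obtain R T where K: "K = (R, T)" by (cases K)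
  obtain W1 Pw1 where P1: "P1 = (W1, Pw1)" by (cases P1)
  obtain W2 Pw2 where P2: "P2 = (W2, Pw2)" by (cases P2)
  have m1: "finite T" "consistent R" "finite W1" "W1 \<noteq> {}" "\<forall>I\<in>W1. wf_world I" "\<forall>I\<in>W1. 0 \<le> Pw1 I"
    "sum Pw1 W1 = 1" "\<forall>I\<in>W1. \<forall>g\<in>T. world_models_gci I g" "induced_dist (W1, Pw1) = me_dist R"
    using assms(3) unfolding K P1 me_model_def alcp_interp_def by auto
  have m2: "finite W2" "W2 \<noteq> {}" "\<forall>I\<in>W2. wf_world I" "\<forall>I\<in>W2. 0 \<le> Pw2 I"
    "sum Pw2 W2 = 1" "\<forall>I\<in>W2. \<forall>g\<in>T. world_models_gci I g" "induced_dist (W2, Pw2) = me_dist R"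
    using assms(4) unfolding K P2 me_model_def alcp_interp_def by auto
  define d1 where "d1 = (\<Sum>I\<in>{I\<in>W1. psat (wval I) \<kappa>}. Pw1 I)"
  define d2 where "d2 = (\<Sum>I\<in>{I\<in>W2. psat (wval I) \<kappa>}. Pw2 I)"
  define n1 where "n1 = (\<Sum>I\<in>{I\<in>W1. psat (wval I) \<kappa> \<and> world_sat_incl I C D}. Pw1 I)"
  define n2 where "n2 = (\<Sum>I\<in>{I\<in>W2. psat (wval I) \<kappa> \<and> world_sat_incl I C D}. Pw2 I)"
  have c1: "d1 > 0" "n1 / d1 = p1"
    using assms(5) unfolding P1 cond_pr_def Let_def d1_def n1_def by (auto split: if_splits)
  have c2: "d2 > 0" "n2 / d2 = p2"
    using assms(6) unfolding P2 cond_pr_def Let_def d2_def n2_def by (auto split: if_splits)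
  have "d1 = d2" unfolding d1_def d2_def
    using den_induced[OF m1(3)] den_induced[OF m2(1)] m1(9) m2(7) by metis
  define t where "t = (p2 - p) / (p2 - p1)"
  have t0: "0 \<le> t" "t \<le> 1" using assms(2,7,8) unfolding t_def by (auto simp: field_simps)
  define W where "W = W1 \<union> W2"
  define Pw where "Pw = (\<lambda>I. t * (if I \<in> W1 then Pw1 I else 0) + (1 - t) * (if I \<in> W2 then Pw2 I else 0))"
  have fW: "finite W" "W1 \<subseteq> W" "W2 \<subseteq> W" using m1(3) m2(1) unfolding W_def by auto
  have ms: "(\<Sum>I\<in>{I\<in>W. Q I}. Pw I) = t * (\<Sum>I\<in>{I\<in>W1. Q I}. Pw1 I) + (1 - t) * (\<Sum>I\<in>{I\<in>W2. Q I}. Pw2 I)"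
    for Q unfolding Pw_def by (rule mix_sum[OF fW])
  have "sum Pw W = 1" using ms[of "\<lambda>_. True"] m1(7) m2(5) by simp
  moreover have "\<forall>I\<in>W. 0 \<le> Pw I" unfolding Pw_def using t0 m1(6) m2(4) by auto
  ultimately have ai: "alcp_interp (W, Pw)"
    unfolding alcp_interp_def using fW m1(4,5) m2(3) unfolding W_def by auto
  have "induced_dist (W, Pw) = me_dist R"
  proof
    fix v
    have "induced_dist (W, Pw) v = t * induced_dist (W1, Pw1) v + (1 - t) * induced_dist (W2, Pw2) v"
      unfolding induced_dist_def using ms[of "\<lambda>I. wval I = v"] by simp
    then show "induced_dist (W, Pw) v = me_dist R v" using m1(9) m2(7) by (simp add: algebra_simps)
  qed
  then have mm: "me_model (W, Pw) K"
    unfolding me_model_def K using m1(1,2,8) m2(6) ai unfolding W_def by auto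
  have den: "(\<Sum>I\<in>{I\<in>W. psat (wval I) \<kappa>}. Pw I) = d1"
    using ms[of "\<lambda>I. psat (wval I) \<kappa>"] \<open>d1 = d2\<close> unfolding d1_def d2_def by (simp add: algebra_simps)
  have num: "(\<Sum>I\<in>{I\<in>W. psat (wval I) \<kappa> \<and> world_sat_incl I C D}. Pw I) = t * n1 + (1 - t) * n2"
    using ms[of "\<lambda>I. psat (wval I) \<kappa> \<and> world_sat_incl I C D"] unfolding n1_def n2_def by simp
  have "n1 = p1 * d1" "n2 = p2 * d1" using c1 c2 \<open>d1 = d2\<close> by (auto simp: field_simps)
  then have "(t * n1 + (1 - t) * n2) / d1 = t * p1 + (1 - t) * p2" using c1 by (simp add: field_simps)
  also have "\<dots> = p2 - t * (p2 - p1)" by (simp add: algebra_simps)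
  also have "\<dots> = p" using assms(2) unfolding t_def by simp
  finally have "cond_pr (W, Pw) C D \<kappa> = Some p"
    unfolding cond_pr_def Let_def using den num c1(1) by simp
  with mm show ?thesis by blast
qed

end
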